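(* Let $\rho_b,\rho_f\in(0,1)$ and $\mu=\frac{(1-\rho_b)(1-\rho_f)}{1-\rho_b\rho_f}$. Let $(x_i)_{i\in\mathbb Z}$ be real numbers with $|x_i|<M$ for all $i$, for some constant $M<\infty$. Define $y_i(k)$ for all $i\in\mathbb Z$, $k\ge0$ by $y_i(0)=\mu x_i$; $y_i(1)=y_i(0)+\rho_b y_{i-1}(0)+\rho_f y_{i+1}(0)$; $y_i(2)=y_i(1)+\rho_b(y_{i-1}(1)-y_{i-1}(0))+\rho_f(y_{i+1}(1)-y_{i+1}(0))-2\rho_b\rho_f y_i(0)$; and for $k\ge2$, $y_i(k+1)=y_i(k)+\rho_b(y_{i-1}(k)-y_{i-1}(k-1))+\rho_f(y_{i+1}(k)-y_{i+1}(k-1))-\rho_b\rho_f(y_i(k-1)-y_i(k-2))$. Then for every $i$, $$\lim_{k\to\infty}y_i(k)=\frac{(1-\rho_b)(1-\rho_f)}{1-\rho_b\rho_f}\Big(x_i+\sum_{j=1}^\infty(\rho_b^j x_{i-j}+\rho_f^j x_{i+j})\Big).$$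
   Context: Sensors indexed by $i\in\mathbb Z$ on a line, each with a time-invariant measurement $x_i$ and consensus variable $y_i(k)$, $k=0,1,2,\dots$; communication only with immediate neighbors $i\pm1$. *)

theory Defs
  imports "HOL-Analysis.Analysis"
begin

definition cons_mu :: "real \<Rightarrow> real \<Rightarrow> real" where
  "cons_mu rb rf = (1 - rb) * (1 - rf) / (1 - rb * rf)"

fun cons_y :: "real \<Rightarrow> real \<Rightarrow> (int \<Rightarrow> real) \<Rightarrow> nat \<Rightarrow> int \<Rightarrow> real" where
  "cons_y rb rf x 0 i = cons_mu rb rf * x i"
| "cons_y rb rf x (Suc 0) i =
     cons_y rb rf x 0 i + rb * cons_y rb rf x 0 (i - 1) + rf * cons_y rb rf x 0 (i + 1)"
| "cons_y rb rf x (Suc (Suc 0)) i =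
     cons_y rb rf x 1 i
     + rb * (cons_y rb rf x 1 (i - 1) - cons_y rb rf x 0 (i - 1))
     + rf * (cons_y rb rf x 1 (i + 1) - cons_y rb rf x 0 (i + 1))
     - 2 * rb * rf * cons_y rb rf x 0 i"
| "cons_y rb rf x (Suc (Suc (Suc k))) i =
     cons_y rb rf x (Suc (Suc k)) i
     + rb * (cons_y rb rf x (Suc (Suc k)) (i - 1) - cons_y rb rf x (Suc k) (i - 1))
     + rf * (cons_y rb rf x (Suc (Suc k)) (i + 1) - cons_y rb rf x (Suc k) (i + 1))
     - rb * rf * (cons_y rb rf x (Suc k) i - cons_y rb rf x k i)"

end

theory Submission
  imports Defs
begin

definition tt :: "real \<Rightarrow> real \<Rightarrow> (int \<Rightarrow> real) \<Rightarrow> int \<Rightarrow> nat \<Rightarrow> real" where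
  "tt rb rf x i j = rb ^ Suc j * x (i - int (Suc j)) + rf ^ Suc j * x (i + int (Suc j))"

lemma closed:
  "cons_y rb rf x k i = cons_mu rb rf * (x i + (\<Sum>j<k. tt rb rf x i j))"
proof (induction rb rf x k i rule: cons_y.induct)
  case (1 rb rf x i)
  then show ?case by simp
next
  case (2 rb rf x i)
  then show ?case by (simp add: tt_def algebra_simps)
next
  case (3 rb rf x i)
  then show ?case by (simp add: tt_def algebra_simps numeral_2_eq_2)
next
  case (4 rb rf x k i)
  have e: "cons_y rb rf x (Suc (Suc (Suc k))) i =
     cons_y rb rf x (Suc (Suc k)) i
     + rb * (cons_y rb rf x (Suc (Suc k)) (i - 1) - cons_y rb rf x (Suc k) (i - 1))
     + rf * (cons_y rb rf x (Suc (Suc k)) (i + 1) - cons_y rb rf x (Suc k) (i + 1))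
     - rb * rf * (cons_y rb rf x (Suc k) i - cons_y rb rf x k i)" by simp
  have a1: "cons_y rb rf x (Suc (Suc k)) (i - 1) - cons_y rb rf x (Suc k) (i - 1) = cons_mu rb rf * tt rb rf x (i - 1) (Suc k)"
    using "4.IH" by (simp add: algebra_simps)
  have a2: "cons_y rb rf x (Suc (Suc k)) (i + 1) - cons_y rb rf x (Suc k) (i + 1) = cons_mu rb rf * tt rb rf x (i + 1) (Suc k)"
    using "4.IH" by (simp add: algebra_simps)
  have b: "cons_y rb rf x (Suc k) i - cons_y rb rf x k i = cons_mu rb rf * tt rb rf x i k"
    using "4.IH" by (simp add: algebra_simps)
  have c: "rb * tt rb rf x (i - 1) (Suc k) + rf * tt rb rf x (i + 1) (Suc k) - rb * rf * tt rb rf x i k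
      = tt rb rf x i (Suc (Suc k))"
  proof -
    have 1: "i - 1 - int (Suc (Suc k)) = i - int (Suc (Suc (Suc k)))" by simp
    have 2: "i + 1 + int (Suc (Suc k)) = i + int (Suc (Suc (Suc k)))" by simp
    have 3: "i - 1 + int (Suc (Suc k)) = i + int (Suc k)" by simp
    have 4: "i + 1 - int (Suc (Suc k)) = i - int (Suc k)" by simp
    show ?thesis unfolding tt_def 1 2 3 4 by (simp add: algebra_simps)
  qed
  have "cons_y rb rf x (Suc (Suc (Suc k))) i = cons_y rb rf x (Suc (Suc k)) i
     + cons_mu rb rf * (rb * tt rb rf x (i - 1) (Suc k) + rf * tt rb rf x (i + 1) (Suc k) - rb * rf * tt rb rf x i k)"
    unfolding e a1 a2 b by (simp add: algebra_simps)
  also have "\<dots> = cons_mu rb rf * (x i + (\<Sum>j<Suc (Suc (Suc k)). tt rb rf x i j))"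
    unfolding c "4.IH" by (simp add: algebra_simps)
  finally show ?case .
qed

theorem mainTheorem2:
  fixes rb rf M :: real and x :: "int \<Rightarrow> real"
  assumes "0 < rb" "rb < 1" "0 < rf" "rf < 1"
    and "\<And>i. \<bar>x i\<bar> < M"
  shows "\<forall>i::int. (\<lambda>k. cons_y rb rf x k i) \<longlonglongrightarrow>
           (1 - rb) * (1 - rf) / (1 - rb * rf) *
           (x i + (\<Sum>j. rb ^ Suc j * x (i - int (Suc j)) + rf ^ Suc j * x (i + int (Suc j))))"
proof
  fix i :: int
  have s1: "summable (\<lambda>j. M * (rb ^ Suc j + rf ^ Suc j))"
    using assms by (intro summable_mult summable_add summable_mult) (auto simp: summable_geometric)
  have s: "summable (tt rb rf x i)"
  proof (rule summable_comparison_test[OF _ s1], intro exI allI impI)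
    fix j
    have "\<bar>rb ^ Suc j * x (i - int (Suc j))\<bar> \<le> rb ^ Suc j * M"
      using assms(1) assms(5)[of "i - int (Suc j)"] by (simp add: abs_mult less_imp_le)
    moreover have "\<bar>rf ^ Suc j * x (i + int (Suc j))\<bar> \<le> rf ^ Suc j * M"
      using assms(3) assms(5)[of "i + int (Suc j)"] by (simp add: abs_mult less_imp_le)
    ultimately show "norm (tt rb rf x i j) \<le> M * (rb ^ Suc j + rf ^ Suc j)"
      unfolding tt_def by (simp add: algebra_simps)
  qed
  have "(\<lambda>k. cons_mu rb rf * (x i + (\<Sum>j<k. tt rb rf x i j))) \<longlonglongrightarrow>
        cons_mu rb rf * (x i + (\<Sum>j. tt rb rf x i j))"
    by (intro tendsto_intros summable_LIMSEQ s)
  then show "(\<lambda>k. cons_y rb rf x k i) \<longlonglongrightarrow>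
           (1 - rb) * (1 - rf) / (1 - rb * rf) *
           (x i + (\<Sum>j. rb ^ Suc j * x (i - int (Suc j)) + rf ^ Suc j * x (i + int (Suc j))))"
    unfolding closed by (simp add: cons_mu_def tt_def)
qed

end
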